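(* Let $q$ be a prime power, $b$ a positive integer, and $\boldsymbol{B}$ an $M\times M$ matrix with nonnegative integer entries. Then \[ N_b(\boldsymbol{B})\ge\begin{cases}\dfrac{2q^b}{(q^b-1)M^2}\sum_{i<j}[\boldsymbol{B}]_{ij}, & \text{if } M\equiv 0\pmod{q^b},\\[2mm] \dfrac{2q^b}{(q^b-1)(M^2-1)}\sum_{i<j}[\boldsymbol{B}]_{ij}, & \text{if } M\equiv 1\pmod{q^b},\\[2mm] \dfrac{2q^b}{M^2(q^b-1)-m(q^b-m)}\sum_{i<j}[\boldsymbol{B}]_{ij}, & \text{if } M\equiv m\pmod{q^b},\ m>1.\end{cases} \]
   Context: For $\boldsymbol{z}=(z_0,\ldots,z_{n-1}),\boldsymbol{w}\in\mathbb{F}_q^n$, the $b$-symbol distance $d_b(\boldsymbol{z},\boldsymbol{w})$ is the number of $i\in\{0,\ldots,n-1\}$ with $(z_i,\ldots,z_{i+b-1})\ne(w_i,\ldots,w_{i+b-1})$ (indices mod $n$). $N_b(\boldsymbol{B})$ is the smallest $r$ such that there exist $\boldsymbol{p}_1,\ldots,\boldsymbol{p}_M\in\mathbb{F}_q^r$ (in some ordering) with $d_b(\boldsymbol{p}_i,\boldsymbol{p}_j)\ge[\boldsymbol{B}]_{ij}$ for all $i,j$. In the third case $m$ denotes the residue of $M$ modulo $q^b$, with $1<m<q^b$. *)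

theory Defs
  imports Complex_Main
begin

definition bdist :: "nat \<Rightarrow> 'a list \<Rightarrow> 'a list \<Rightarrow> nat" where
  "bdist b z w = card {i. i < length z \<and>
      (\<exists>k<b. z ! ((i + k) mod length z) \<noteq> w ! ((i + k) mod length z))}"

definition Nb :: "'a itself \<Rightarrow> nat \<Rightarrow> nat \<Rightarrow> (nat \<Rightarrow> nat \<Rightarrow> nat) \<Rightarrow> nat" where
  "Nb _ b M B = (LEAST r. \<exists>p :: nat \<Rightarrow> 'a list.
      (\<forall>i<M. length (p i) = r) \<and>
      (\<forall>i<M. \<forall>j<M. i \<noteq> j \<longrightarrow> bdist b (p i) (p j) \<ge> B i j))"

end

theory Submission
  imports Defs
begin

lemma card_sum: "card {t. t<(r::nat) \<and> P t} = (\<Sum>t<r. if P t then 1 else (0::nat))"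
proof (induction r)
  case 0 then show ?case by simp
next
  case (Suc r)
  have "{t. t<Suc r \<and> P t} = (if P r then insert r {t. t<r \<and> P t} else {t. t<r \<and> P t})"
    by (auto simp: less_Suc_eq)
  then show ?case using Suc by simp
qed

lemma half_sum: fixes M :: nat shows "2 * (\<Sum>j<M. \<Sum>i<j. if f i \<noteq> f j then 1 else (0::int))
   = (\<Sum>i<M. \<Sum>j<M. if f i \<noteq> f j then 1 else 0)"
proof (induction M)
  case 0 then show ?case by simp
next
  case (Suc M)
  have "(\<Sum>i<Suc M. \<Sum>j<Suc M. if f i \<noteq> f j then 1 else (0::int)) =
     (\<Sum>i<M. \<Sum>j<M. if f i \<noteq> f j then 1 else 0) + (\<Sum>i<M. if f i \<noteq> f M then 1 else 0)
     + (\<Sum>j<M. if f M \<noteq> f j then 1 else 0)"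
    by (simp add: sum.distrib)
  also have "(\<Sum>j<M. if f M \<noteq> f j then 1 else (0::int)) = (\<Sum>i<M. if f i \<noteq> f M then 1 else 0)"
    by (metis (no_types))
  finally show ?case using Suc by simp
qed

lemma sq_sum:
  fixes f :: "nat \<Rightarrow> 'b" and M :: nat
  defines "n \<equiv> \<lambda>v. card {j. j<M \<and> f j = v}"
  shows "(\<Sum>i<M. \<Sum>j<M. if f i = f j then 1 else (0::int)) = (\<Sum>v\<in>f ` {..<M}. int (n v)^2)"
    and "(\<Sum>v\<in>f ` {..<M}. int (n v)) = int M"
proof -
  have inner: "(\<Sum>j<M. if f i = f j then 1 else (0::int)) = int (n (f i))" for i
  proof -
    have "(\<Sum>j<M. if f i = f j then 1 else (0::int)) = int (\<Sum>j<M. if f j = f i then 1 else 0)"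
      unfolding of_nat_sum by (rule sum.cong) auto
    also have "\<dots> = int (n (f i))" unfolding n_def by (simp add: card_sum)
    finally show ?thesis .
  qed
  have "(\<Sum>i<M. \<Sum>j<M. if f i = f j then 1 else (0::int)) = (\<Sum>i<M. int (n (f i)))"
    using inner by simp
  also have "\<dots> = (\<Sum>v\<in>f ` {..<M}. \<Sum>i\<in>{x\<in>{..<M}. f x = v}. int (n (f i)))"
    by (rule sum.image_gen) simp
  also have "\<dots> = (\<Sum>v\<in>f ` {..<M}. int (n v)^2)"
  proof (rule sum.cong)
    fix v assume "v \<in> f ` {..<M}"
    have "(\<Sum>i\<in>{x\<in>{..<M}. f x = v}. int (n (f i))) = (\<Sum>i\<in>{x\<in>{..<M}. f x = v}. int (n v))"
      by (rule sum.cong) auto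
    also have "\<dots> = int (card {x\<in>{..<M}. f x = v}) * int (n v)" by simp
    also have "card {x\<in>{..<M}. f x = v} = n v" unfolding n_def by (simp add: lessThan_def)
    finally show "(\<Sum>i\<in>{x\<in>{..<M}. f x = v}. int (n (f i))) = int (n v)^2"
      by (simp add: power2_eq_square)
  qed simp
  finally show "(\<Sum>i<M. \<Sum>j<M. if f i = f j then 1 else (0::int)) = (\<Sum>v\<in>f ` {..<M}. int (n v)^2)" .
  have "int M = (\<Sum>i<M. 1::int)" by simp
  also have "\<dots> = (\<Sum>v\<in>f ` {..<M}. \<Sum>i\<in>{x\<in>{..<M}. f x = v}. 1::int)"
    by (rule sum.image_gen) simp
  also have "\<dots> = (\<Sum>v\<in>f ` {..<M}. int (n v))"
    by (rule sum.cong) (auto simp: n_def lessThan_def)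
  finally show "(\<Sum>v\<in>f ` {..<M}. int (n v)) = int M" by simp
qed

lemma pos_bound:
  fixes f :: "nat \<Rightarrow> 'b"
  assumes "card (f ` {..<M}) \<le> Q" "Q > 0"
  shows "int Q * (2 * (\<Sum>j<M. \<Sum>i<j. if f i \<noteq> f j then 1 else 0))
     \<le> int M^2 * (int Q - 1) - int (M mod Q) * (int Q - int (M mod Q))"
proof -
  define n where "n \<equiv> \<lambda>v. card {j. j<M \<and> f j = v}"
  define V where "V = f ` {..<M}"
  define k where "k = M div Q"
  define m where "m = M mod Q"
  have Mkm: "int M = int k * int Q + int m" unfolding k_def m_def
    by (metis div_mult_mod_eq of_nat_add of_nat_mult)
  have ne: "(\<Sum>i<M. \<Sum>j<M. if f i \<noteq> f j then 1 else (0::int)) = int M^2 - (\<Sum>i<M. \<Sum>j<M. if f i = f j then 1 else (0::int))"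
  proof -
    have "(\<Sum>i<M. \<Sum>j<M. if f i \<noteq> f j then 1 else (0::int)) + (\<Sum>i<M. \<Sum>j<M. if f i = f j then 1 else (0::int))
      = (\<Sum>i<M. \<Sum>j<M. 1::int)"
    proof -
      have e: "\<And>x y. (if f x \<noteq> f y then 1 else 0) + (if f x = f y then 1 else (0::int)) = 1" by simp
      show ?thesis by (simp only: sum.distrib[symmetric] e)
    qed
    then show ?thesis by (simp add: power2_eq_square)
  qed
  have sq: "(\<Sum>v\<in>V. int (n v)^2) \<ge> (\<Sum>v\<in>V. (2*int k+1) * int (n v) - int k*(int k+1))"
  proof (rule sum_mono)
    fix v
    have "(int (n v) - int k) * (int (n v) - int k - 1) \<ge> 0"
      by (cases "int (n v) \<le> int k") (auto intro: mult_nonpos_nonpos)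
    then show "(2*int k+1) * int (n v) - int k*(int k+1) \<le> int (n v)^2"
      by (simp add: algebra_simps power2_eq_square)
  qed
  have "(\<Sum>v\<in>V. (2*int k+1) * int (n v) - int k*(int k+1)) = (2*int k+1) * int M - int (card V) * (int k*(int k+1))"
    using sq_sum(2)[where f=f and M=M] unfolding V_def n_def by (simp add: sum_subtractf sum_distrib_left[symmetric])
  also have "\<dots> \<ge> (2*int k+1) * int M - int Q * (int k*(int k+1))"
    using assms(1) unfolding V_def by (intro diff_left_mono mult_right_mono) auto
  finally have lb: "(\<Sum>v\<in>V. int (n v)^2) \<ge> (2*int k+1) * int M - int Q * (int k*(int k+1))"
    using sq by linarith
  have "int Q * (2 * (\<Sum>j<M. \<Sum>i<j. if f i \<noteq> f j then 1 else 0))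
      = int Q * (int M^2 - (\<Sum>v\<in>V. int (n v)^2))"
    using half_sum[of f M] ne sq_sum(1)[where f=f and M=M] unfolding V_def n_def by simp
  also have "\<dots> \<le> int Q * (int M^2 - ((2*int k+1) * int M - int Q * (int k*(int k+1))))"
    using lb assms(2) by (intro mult_left_mono) auto
  also have "\<dots> = int M^2 * (int Q - 1) - int m * (int Q - int m)"
    unfolding Mkm by (simp add: algebra_simps power2_eq_square)
  finally show ?thesis unfolding m_def .
qed


lemma key:
  fixes p :: "nat \<Rightarrow> 'a::finite list"
  assumes q: "card (UNIV :: 'a set) = q" and bpos: "b > 0"
    and len: "\<forall>i<M. length (p i) = r"
    and dist: "\<forall>i<M. \<forall>j<M. i \<noteq> j \<longrightarrow> bdist b (p i) (p j) \<ge> B i j"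
  shows "int (q^b) * (2 * (\<Sum>j<M. \<Sum>i<j. int (B i j)))
     \<le> int r * (int M^2 * (int (q^b) - 1) - int (M mod q^b) * (int (q^b) - int (M mod q^b)))"
proof -
  define Q where "Q = q^b"
  define D where "D = int M^2 * (int Q - 1) - int (M mod Q) * (int Q - int (M mod Q))"
  define g where "g t i = map (\<lambda>k. p i ! ((t+k) mod r)) [0..<b]" for t i
  have "q > 0" using q finite_UNIV card_gt_0_iff by blast
  then have Qpos: "Q > 0" unfolding Q_def by simp
  have bd: "int (bdist b (p i) (p j)) = (\<Sum>t<r. if g t i \<noteq> g t j then 1 else 0)"
    if "i<M" "j<M" for i j
  proof -
    have "bdist b (p i) (p j) = card {t. t < r \<and> g t i \<noteq> g t j}"
      unfolding bdist_def g_def using len that by (simp add: map_eq_conv atLeast0LessThan lessThan_iff Bex_def)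
    also have "\<dots> = (\<Sum>t<r. if g t i \<noteq> g t j then 1 else 0)" by (rule card_sum)
    finally have "int (bdist b (p i) (p j)) = int (\<Sum>t<r. if g t i \<noteq> g t j then 1 else 0)" by simp
    then show ?thesis unfolding of_nat_sum by (simp add: if_distrib cong: if_cong)
  qed
  have cardim: "card (g t ` {..<M}) \<le> Q" for t
  proof -
    have "g t ` {..<M} \<subseteq> {xs. set xs \<subseteq> (UNIV::'a set) \<and> length xs = b}"
      unfolding g_def by auto
    then have "card (g t ` {..<M}) \<le> card {xs. set xs \<subseteq> (UNIV::'a set) \<and> length xs = b}"
      by (intro card_mono finite_lists_length_eq) auto
    also have "\<dots> = Q" unfolding Q_def using card_lists_length_eq[of "UNIV::'a set" b] q by simp
    finally show ?thesis .
  qed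
  have "(\<Sum>j<M. \<Sum>i<j. int (B i j)) \<le> (\<Sum>j<M. \<Sum>i<j. int (bdist b (p i) (p j)))"
    using dist by (intro sum_mono) auto
  also have "\<dots> = (\<Sum>j<M. \<Sum>i<j. \<Sum>t<r. if g t i \<noteq> g t j then 1 else 0)"
    using bd by (intro sum.cong refl) auto
  also have "\<dots> = (\<Sum>t<r. \<Sum>j<M. \<Sum>i<j. if g t i \<noteq> g t j then 1 else 0)"
  proof -
    have "(\<Sum>i<j. \<Sum>t<r. (if g t i \<noteq> g t j then 1 else 0::int)) = (\<Sum>t<r. \<Sum>i<j. if g t i \<noteq> g t j then 1 else 0)" for j
      by (rule sum.swap)
    note sw = this
    have "(\<Sum>j<M. \<Sum>i<j. \<Sum>t<r. (if g t i \<noteq> g t j then 1 else 0::int)) = (\<Sum>j<M. \<Sum>t<r. \<Sum>i<j. if g t i \<noteq> g t j then 1 else 0)"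
      by (simp only: sw)
    also have "\<dots> = (\<Sum>t<r. \<Sum>j<M. \<Sum>i<j. if g t i \<noteq> g t j then 1 else 0)"
      by (rule sum.swap)
    finally show ?thesis .
  qed
  finally have le1: "(\<Sum>j<M. \<Sum>i<j. int (B i j)) \<le> (\<Sum>t<r. \<Sum>j<M. \<Sum>i<j. if g t i \<noteq> g t j then 1 else 0)" .
  have "int Q * (2 * (\<Sum>j<M. \<Sum>i<j. int (B i j))) \<le> int Q * (2 * (\<Sum>t<r. \<Sum>j<M. \<Sum>i<j. if g t i \<noteq> g t j then 1 else 0))"
    using le1 by (intro mult_left_mono) auto
  also have "\<dots> = (\<Sum>t<r. int Q * (2 * (\<Sum>j<M. \<Sum>i<j. if g t i \<noteq> g t j then 1 else 0)))"
    by (simp add: sum_distrib_left)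
  also have "\<dots> \<le> (\<Sum>t<r. D)"
    unfolding D_def by (intro sum_mono pos_bound cardim Qpos)
  also have "\<dots> = int r * D" by simp
  finally show ?thesis unfolding D_def Q_def .
qed

lemma exists_code:
  assumes "b > 0"
  shows "\<exists>r. \<exists>p :: nat \<Rightarrow> 'a::field list.
      (\<forall>i<M. length (p i) = r) \<and>
      (\<forall>i<M. \<forall>j<M. i \<noteq> j \<longrightarrow> bdist b (p i) (p j) \<ge> B i j)"
proof -
  define T where "T = (\<Sum>i<M. \<Sum>j<M. B i j)"
  define p :: "nat \<Rightarrow> 'a list" where "p i = map (\<lambda>t. if t div T = i then 1 else 0) [0..<M*T]" for i
  have "bdist b (p i) (p j) \<ge> B i j" if "i<M" "j<M" "i\<noteq>j" for i j
  proof -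
    have "B i j \<le> (\<Sum>j<M. B i j)" using that(2) by (intro member_le_sum) auto
    also have "\<dots> \<le> T" unfolding T_def using that(1)
      by (intro member_le_sum[where f="\<lambda>i. \<Sum>j<M. B i j"]) auto
    finally have BT: "B i j \<le> T" .
    show ?thesis
    proof (cases "T = 0")
      case True then show ?thesis using BT by simp
    next
      case False
      have sub: "{i*T..<i*T+T} \<subseteq> {t. t < length (p i) \<and>
        (\<exists>k<b. p i ! ((t + k) mod length (p i)) \<noteq> p j ! ((t + k) mod length (p i)))}"
      proof
        fix t assume t: "t \<in> {i*T..<i*T+T}"
        have "Suc i*T \<le> M*T" using that(1) by (intro mult_le_mono1) simp
        then have "i*T+T \<le> M*T" by simp
        then have tl: "t < M*T" using t by auto
        have "t div T = i" using t by (intro div_nat_eqI) (auto simp: mult.commute)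
        then show "t \<in> {t. t < length (p i) \<and>
          (\<exists>k<b. p i ! ((t + k) mod length (p i)) \<noteq> p j ! ((t + k) mod length (p i)))}"
          using tl assms that(3) by (intro CollectI conjI exI[of _ 0]) (auto simp: p_def)
      qed
      have "B i j \<le> card {i*T..<i*T+T}" using BT by simp
      also have "\<dots> \<le> bdist b (p i) (p j)" unfolding bdist_def
        by (rule card_mono[OF _ sub]) auto
      finally show ?thesis .
    qed
  qed
  then show ?thesis by (intro exI[of _ "M*T"] exI[of _ p]) (auto simp: p_def)
qed

lemma fin_div:
  fixes Q S r D :: real
  assumes "2*Q*S \<le> r*D" "D \<ge> 0" "r \<ge> 0"
  shows "2*Q/D*S \<le> r"
proof (cases "D = 0")
  case True then show ?thesis using assms by simp
next
  case False
  then have "D > 0" using assms by simp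
  then show ?thesis using assms(1) by (simp add: pos_divide_le_eq mult.commute)
qed

theorem lemma4p1:
  fixes F :: "'a::{finite,field} itself" and q b M :: nat and B :: "nat \<Rightarrow> nat \<Rightarrow> nat"
  assumes "card (UNIV :: 'a set) = q"
    and "b > 0"
  defines "S \<equiv> real (\<Sum>j<M. \<Sum>i<j. B i j)"
  defines "Q \<equiv> real q ^ b"
  shows "(M mod q ^ b = 0 \<longrightarrow>
            real (Nb F b M B) \<ge> 2 * Q / ((Q - 1) * real M ^ 2) * S)
       \<and> (M mod q ^ b = 1 \<longrightarrow>
            real (Nb F b M B) \<ge> 2 * Q / ((Q - 1) * (real M ^ 2 - 1)) * S)
       \<and> (\<forall>m. m = M mod q ^ b \<and> 1 < m \<longrightarrow>
            real (Nb F b M B) \<ge>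
              2 * Q / (real M ^ 2 * (Q - 1) - real m * (Q - real m)) * S)"
proof -
  define P where "P r = (\<exists>p :: nat \<Rightarrow> 'a list.
      (\<forall>i<M. length (p i) = r) \<and>
      (\<forall>i<M. \<forall>j<M. i \<noteq> j \<longrightarrow> bdist b (p i) (p j) \<ge> B i j))" for r
  have ex: "\<exists>r. P r" unfolding P_def by (rule exists_code[OF assms(2)])
  have NbP: "Nb F b M B = (LEAST r. P r)" unfolding Nb_def P_def by simp
  have "P (Nb F b M B)" unfolding NbP by (rule LeastI_ex[OF ex])
  then obtain p :: "nat \<Rightarrow> 'a list" where p1: "\<forall>i<M. length (p i) = Nb F b M B"
    and p2: "\<forall>i<M. \<forall>j<M. i \<noteq> j \<longrightarrow> bdist b (p i) (p j) \<ge> B i j"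
    unfolding P_def by blast
  define m where "m = M mod q^b"
  define r where "r = Nb F b M B"
  have K: "int (q^b) * (2 * (\<Sum>j<M. \<Sum>i<j. int (B i j)))
     \<le> int r * (int M^2 * (int (q^b) - 1) - int m * (int (q^b) - int m))"
    unfolding m_def r_def by (rule key[OF assms(1,2) p1 p2])
  have Sint: "S = real_of_int (\<Sum>j<M. \<Sum>i<j. int (B i j))" unfolding S_def by simp
  define D where "D = real M^2 * (Q - 1) - real m * (Q - real m)"
  have KR: "2*Q*S \<le> real r * D"
  proof -
    have "real_of_int (int (q^b) * (2 * (\<Sum>j<M. \<Sum>i<j. int (B i j))))
     \<le> real_of_int (int r * (int M^2 * (int (q^b) - 1) - int m * (int (q^b) - int m)))"
      using K by linarith
    then show ?thesis unfolding Sint D_def Q_def by (simp add: algebra_simps)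
  qed
  have q2: "q \<ge> 2"
  proof -
    have "{0::'a, 1} \<subseteq> UNIV" by simp
    then have "card {0::'a, 1} \<le> card (UNIV::'a set)" by (intro card_mono) auto
    then show ?thesis using assms(1) by simp
  qed
  have "q^1 \<le> q^b" using q2 assms(2) by (intro power_increasing) auto
  then have Qnat: "q^b \<ge> 2" using q2 by simp
  have QQ: "Q = real (q^b)" unfolding Q_def by simp
  have Q2: "Q \<ge> 2" unfolding QQ using Qnat by linarith
  have mQ: "m < q^b" unfolding m_def using Qnat by (intro mod_less_divisor) linarith
  have mM: "m \<le> M" unfolding m_def by simp
  have r0: "real r \<ge> 0" by simp
  show ?thesis
  proof (intro conjI impI allI)
    assume "M mod q ^ b = 0"
    then have "m = 0" unfolding m_def by simp
    then have "D = (Q - 1) * real M ^ 2" unfolding D_def by simp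
    moreover have "(Q - 1) * real M ^ 2 \<ge> 0" using Q2 by simp
    ultimately show "real (Nb F b M B) \<ge> 2 * Q / ((Q - 1) * real M ^ 2) * S"
      using fin_div[OF KR _ r0] unfolding r_def by simp
  next
    assume "M mod q ^ b = 1"
    then have m1: "m = 1" unfolding m_def by simp
    then have "D = (Q - 1) * (real M ^ 2 - 1)" unfolding D_def by (simp add: algebra_simps)
    moreover have "(Q - 1) * (real M ^ 2 - 1) \<ge> 0" using Q2 mM m1
      by (intro mult_nonneg_nonneg) (simp_all add: one_le_power)
    ultimately show "real (Nb F b M B) \<ge> 2 * Q / ((Q - 1) * (real M ^ 2 - 1)) * S"
      using fin_div[OF KR _ r0] unfolding r_def by simp
  next
    fix m' assume a: "m' = M mod q ^ b \<and> 1 < m'"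
    then have mm: "m' = m" and m1: "1 < m" unfolding m_def by auto
    have mQr: "real m < Q" using mQ QQ by simp
    have "real m ^ 2 \<le> real M ^ 2" using mM by (simp add: power_mono)
    then have "real m ^ 2 * (Q - 1) \<le> real M ^ 2 * (Q - 1)" using Q2 by (intro mult_right_mono) auto
    moreover have "real m * (Q - real m) \<le> real m ^ 2 * (Q - 1)"
    proof -
      have "real m ^ 2 * (Q - 1) - real m * (Q - real m) = real m * Q * (real m - 1)"
        by (simp add: algebra_simps power2_eq_square)
      moreover have "real m * Q * (real m - 1) \<ge> 0" using m1 Q2 by simp
      ultimately show ?thesis by linarith
    qed
    ultimately have "D \<ge> 0" unfolding D_def by linarith
    then show "real (Nb F b M B) \<ge> 2 * Q / (real M ^ 2 * (Q - 1) - real m' * (Q - real m')) * S"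
      using fin_div[OF KR _ r0] unfolding r_def mm D_def by simp
  qed
qed

end
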